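(* As formal power series in variables $p_1,p_2,\dots$, $$\sum_{\ell(\mu)\ge2}\frac{(|\mu|+\ell(\mu)-3)!\,(\ell(\mu)-1)\,p_\mu}{(|\mu|-1)!\,z_\mu}=\frac12\left(\sum_{\mu\ne\emptyset}\frac{(|\mu|+\ell(\mu)-2)!\,p_\mu}{(|\mu|-1)!\,z_\mu}\right)^2,$$ where the sums are over partitions $\mu$.
   Context: A partition is $\mu=(\mu_1\ge\cdots\ge\mu_k>0)$ with $|\mu|=\sum\mu_i$ and $\ell(\mu)=k$. $m_j(\mu)$ is the number of parts equal to $j$, $z_\mu=\prod_jm_j(\mu)!\,j^{m_j(\mu)}$, and $p_\mu=\prod_jp_j^{m_j(\mu)}$. *)

theory Defs
  imports Complex_Main "HOL-Library.Multiset"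
begin

text \<open>Partitions are finite multisets of positive integers (the parts).
A formal power series in the variables p_1, p_2, ... is represented by its
coefficient function: the coefficient of the monomial p_mu for every multiset mu
of natural numbers (the coefficients at multisets containing 0, which are not
partitions, are 0 for all series considered).\<close>

definition is_partition :: "nat multiset \<Rightarrow> bool" where
  "is_partition \<mu> \<longleftrightarrow> 0 \<notin># \<mu>"

definition psize :: "nat multiset \<Rightarrow> nat" where
  "psize \<mu> = sum_mset \<mu>"

definition plen :: "nat multiset \<Rightarrow> nat" where
  "plen \<mu> = size \<mu>"

definition zee :: "nat multiset \<Rightarrow> nat" where
  "zee \<mu> = (\<Prod>j\<in>set_mset \<mu>. fact (count \<mu> j) * j ^ count \<mu> j)"

text \<open>Product of formal power series in p_1,p_2,...: since p_nu * p_rho = p_(nu+rho)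
(multiset union), the coefficient of p_mu in f*g is the sum over splittings mu = nu + rho.\<close>

definition mps_mult :: "(nat multiset \<Rightarrow> real) \<Rightarrow> (nat multiset \<Rightarrow> real) \<Rightarrow> nat multiset \<Rightarrow> real" where
  "mps_mult f g \<mu> = (\<Sum>\<nu>\<in>{\<nu>. \<nu> \<subseteq># \<mu>}. f \<nu> * g (\<mu> - \<nu>))"

end

theory Submission imports Defs begin
lemma sum_count_mset: "(\<Sum>j\<in>set_mset \<nu>. of_nat (count \<nu> j) * (g j::real)) = (\<Sum>j\<in>#\<nu>. g j)"
proof (induction \<nu>)
  case empty
  then show ?case by simp
next
  case (add x \<nu>)
  show ?case
  proof (cases "x \<in># \<nu>")
    case True
    have "(\<Sum>j\<in>set_mset (add_mset x \<nu>). of_nat (count (add_mset x \<nu>) j) * g j)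
       = (\<Sum>j\<in>set_mset \<nu>. of_nat (count \<nu> j) * g j + (if j = x then g j else 0))"
      using True by (intro sum.cong) (auto simp: algebra_simps insert_absorb)
    also have "\<dots> = (\<Sum>j\<in>set_mset \<nu>. of_nat (count \<nu> j) * g j) + g x"
      using True by (simp add: sum.distrib)
    finally show ?thesis using add by simp
  next
    case False
    have "(\<Sum>j\<in>set_mset (add_mset x \<nu>). of_nat (count (add_mset x \<nu>) j) * g j)
       = g x + (\<Sum>j\<in>set_mset \<nu>. of_nat (count (add_mset x \<nu>) j) * g j)"
      using False by (simp add: count_eq_zero_iff)
    also have "(\<Sum>j\<in>set_mset \<nu>. of_nat (count (add_mset x \<nu>) j) * g j) = (\<Sum>j\<in>set_mset \<nu>. of_nat (count \<nu> j) * g j)"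
      using False by (intro sum.cong) auto
    finally show ?thesis using add by simp
  qed
qed

lemma fin_sub: "finite {\<nu>. \<nu> \<subseteq># (\<mu>::'a multiset)}"
proof (induction \<mu>)
  case empty
  then show ?case by simp
next
  case (add x \<mu>)
  have "{\<nu>. \<nu> \<subseteq># add_mset x \<mu>} \<subseteq> {\<nu>. \<nu> \<subseteq># \<mu>} \<union> add_mset x ` {\<nu>. \<nu> \<subseteq># \<mu>}"
  proof
    fix \<nu> assume "\<nu> \<in> {\<nu>. \<nu> \<subseteq># add_mset x \<mu>}"
    hence h: "\<nu> \<subseteq># add_mset x \<mu>" by simp
    show "\<nu> \<in> {\<nu>. \<nu> \<subseteq># \<mu>} \<union> add_mset x ` {\<nu>. \<nu> \<subseteq># \<mu>}"
    proof (cases "x \<in># \<nu>")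
      case True
      hence "\<nu> - {#x#} \<subseteq># \<mu>" using h by (metis insert_DiffM mset_subset_eq_add_mset_cancel)
      moreover have "\<nu> = add_mset x (\<nu> - {#x#})" using True by simp
      ultimately show ?thesis by blast
    next
      case False
      hence "\<nu> \<subseteq># \<mu>" using h by (metis Diff_eq_empty_iff_mset minus_add_mset_if_not_in_lhs)
      thus ?thesis by blast
    qed
  qed
  moreover have "finite ({\<nu>. \<nu> \<subseteq># \<mu>} \<union> add_mset x ` {\<nu>. \<nu> \<subseteq># \<mu>})" using add by simp
  ultimately show ?case by (rule finite_subset)
qed

definition ff :: "nat multiset \<Rightarrow> real \<Rightarrow> real" where
  "ff \<nu> a = (if \<nu> = {#} then 1 else a * pochhammer (a + real (sum_mset \<nu>) + 1) (size \<nu> - 1))"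

lemma sum_lin: "(\<Sum>j\<in>#\<nu>. a + real j + 1) = real (size \<nu>) * (a + 1) + real (sum_mset \<nu>)"
  by (induction \<nu>) (auto simp: algebra_simps)

lemma ff_delta: "ff \<nu> (a+1) - ff \<nu> a = (\<Sum>j\<in>set_mset \<nu>. real (count \<nu> j) * ff (\<nu> - {#j#}) (a + real j + 1))"
proof (cases "size \<nu> \<le> 1")
  case True
  then consider "\<nu> = {#}" | "size \<nu> = 1" by (cases "\<nu> = {#}") (auto simp: le_Suc_eq)
  then show ?thesis
  proof cases
    case 1 then show ?thesis by (simp add: ff_def)
  next
    case 2
    then obtain j where "\<nu> = {#j#}" using size_1_singleton_mset by blast
    then show ?thesis by (simp add: ff_def)
  qed
next
  case False
  define k where "k = size \<nu>"
  define n where "n = sum_mset \<nu>"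
  define P2 where "P2 = pochhammer (a + real n + 2) (k - 2)"
  have k2: "k \<ge> 2" using False k_def by simp
  have ne: "\<nu> \<noteq> {#}" using k2 k_def by auto
  have each: "ff (\<nu> - {#j#}) (a + real j + 1) = (a + real j + 1) * P2" if j: "j \<in># \<nu>" for j
  proof -
    have sz: "size (\<nu> - {#j#}) = k - 1" using j k_def by (simp add: size_Diff_singleton)
    hence ne': "\<nu> - {#j#} \<noteq> {#}" using k2 by auto
    have sm: "sum_mset \<nu> = j + sum_mset (\<nu> - {#j#})" using j by (metis sum_mset.remove)
    have "real (sum_mset (\<nu> - {#j#})) = real n - real j" using sm n_def by simp
    then show ?thesis using ne' sz by (simp add: ff_def P2_def algebra_simps numeral_eq_Suc)
  qed
  have "(\<Sum>j\<in>set_mset \<nu>. real (count \<nu> j) * ff (\<nu> - {#j#}) (a + real j + 1))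
      = (\<Sum>j\<in>set_mset \<nu>. real (count \<nu> j) * (a + real j + 1)) * P2"
    using each by (simp add: sum_distrib_right mult.assoc)
  also have "\<dots> = (real k * (a + 1) + real n) * P2"
    using sum_count_mset[of \<nu> "\<lambda>j. a + real j + 1"] sum_lin k_def n_def by simp
  finally have R: "(\<Sum>j\<in>set_mset \<nu>. real (count \<nu> j) * ff (\<nu> - {#j#}) (a + real j + 1)) = (real k * (a + 1) + real n) * P2" .
  have e1: "k - 1 = Suc (k - 2)" using k2 by simp
  have L1: "pochhammer (a + 1 + real n + 1) (k - 1) = P2 * (a + real n + 2 + real (k - 2))"
    unfolding e1 pochhammer_Suc P2_def by (simp add: algebra_simps)
  have L2: "pochhammer (a + real n + 1) (k - 1) = (a + real n + 1) * P2"
    unfolding e1 pochhammer_rec P2_def by (simp add: algebra_simps)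
  have rk: "real (k - 2) = real k - 2" using k2 by simp
  have "ff \<nu> (a+1) - ff \<nu> a = (a+1) * pochhammer (a + 1 + real n + 1) (k - 1) - a * pochhammer (a + real n + 1) (k - 1)"
    using ne by (simp add: ff_def k_def n_def)
  also have "\<dots> = (real k * (a + 1) + real n) * P2" unfolding L1 L2 rk by (simp add: algebra_simps)
  finally show ?thesis using R by simp
qed

definition Cm :: "nat multiset \<Rightarrow> nat multiset \<Rightarrow> nat" where
  "Cm \<mu> \<nu> = (\<Prod>i\<in>set_mset \<mu>. count \<mu> i choose count \<nu> i)"

lemma Cm_ext:
  assumes "\<nu> \<subseteq># \<mu>" "finite A" "set_mset \<mu> \<subseteq> A"
  shows "Cm \<mu> \<nu> = (\<Prod>i\<in>A. count \<mu> i choose count \<nu> i)"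
  unfolding Cm_def
proof (rule prod.mono_neutral_left[OF assms(2,3)])
  show "\<forall>i\<in>A - set_mset \<mu>. (count \<mu> i choose count \<nu> i) = 1"
  proof
    fix i assume "i \<in> A - set_mset \<mu>"
    hence "count \<mu> i = 0" by (simp add: count_eq_zero_iff)
    moreover have "count \<nu> i \<le> count \<mu> i" using assms(1) by (simp add: mset_subset_eq_count)
    ultimately show "(count \<mu> i choose count \<nu> i) = 1" by simp
  qed
qed

lemma Cm_empty: "Cm \<mu> {#} = 1"
  by (simp add: Cm_def)

lemma Cm_count:
  assumes sub: "\<nu> \<subseteq># \<mu>" and j: "j \<in># \<nu>"
  shows "Cm \<mu> \<nu> * count \<nu> j = count \<mu> j * Cm (\<mu> - {#j#}) (\<nu> - {#j#})"
proof -
  have jm: "j \<in># \<mu>" using sub j by (meson mset_subset_eqD)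
  have sub': "\<nu> - {#j#} \<subseteq># \<mu> - {#j#}" using sub jm by (simp add: subset_eq_diff_conv insert_DiffM)
  have setsub: "set_mset (\<mu> - {#j#}) \<subseteq> set_mset \<mu>" by (meson in_diffD subsetI)
  have C2: "Cm (\<mu> - {#j#}) (\<nu> - {#j#}) = (\<Prod>i\<in>set_mset \<mu>. count (\<mu> - {#j#}) i choose count (\<nu> - {#j#}) i)"
    using Cm_ext[OF sub' _ setsub] by simp
  have "Cm (\<mu> - {#j#}) (\<nu> - {#j#}) = (count \<mu> j - 1 choose (count \<nu> j - 1)) *
      (\<Prod>i\<in>set_mset \<mu> - {j}. count \<mu> i choose count \<nu> i)"
    unfolding C2 using jm by (simp add: prod.remove[of "set_mset \<mu>" j])
  moreover have "Cm \<mu> \<nu> = (count \<mu> j choose count \<nu> j) * (\<Prod>i\<in>set_mset \<mu> - {j}. count \<mu> i choose count \<nu> i)"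
    unfolding Cm_def using jm by (simp add: prod.remove[of "set_mset \<mu>" j])
  moreover have "(count \<mu> j choose count \<nu> j) * count \<nu> j = count \<mu> j * (count \<mu> j - 1 choose (count \<nu> j - 1))"
    using times_binomial_minus1_eq[of "count \<nu> j" "count \<mu> j"] j by (simp add: mult.commute)
  ultimately show ?thesis by (simp add: algebra_simps)
qed

lemma ff_zero: "ff \<nu> 0 = (if \<nu> = {#} then 1 else 0)"
  by (simp add: ff_def)

lemma reindex_j:
  assumes jm: "j \<in># \<mu>"
  shows "(\<Sum>\<nu>\<in>{\<nu>. \<nu> \<subseteq># \<mu>}. real (Cm \<mu> \<nu> * count \<nu> j) * G \<nu>)
       = real (count \<mu> j) * (\<Sum>\<nu>'\<in>{\<nu>'. \<nu>' \<subseteq># \<mu> - {#j#}}. real (Cm (\<mu> - {#j#}) \<nu>') * G (add_mset j \<nu>'))"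
proof -
  have img: "add_mset j ` {\<nu>'. \<nu>' \<subseteq># \<mu> - {#j#}} \<subseteq> {\<nu>. \<nu> \<subseteq># \<mu>}"
    using jm by (auto simp: subset_eq_diff_conv insert_DiffM)
       (metis insert_DiffM mset_subset_eq_add_mset_cancel)
  have "(\<Sum>\<nu>\<in>{\<nu>. \<nu> \<subseteq># \<mu>}. real (Cm \<mu> \<nu> * count \<nu> j) * G \<nu>)
      = (\<Sum>\<nu>\<in>add_mset j ` {\<nu>'. \<nu>' \<subseteq># \<mu> - {#j#}}. real (Cm \<mu> \<nu> * count \<nu> j) * G \<nu>)"
  proof (rule sum.mono_neutral_right[OF fin_sub img])
    show "\<forall>\<nu>\<in>{\<nu>. \<nu> \<subseteq># \<mu>} - add_mset j ` {\<nu>'. \<nu>' \<subseteq># \<mu> - {#j#}}. real (Cm \<mu> \<nu> * count \<nu> j) * G \<nu> = 0"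
    proof
      fix \<nu> assume h: "\<nu> \<in> {\<nu>. \<nu> \<subseteq># \<mu>} - add_mset j ` {\<nu>'. \<nu>' \<subseteq># \<mu> - {#j#}}"
      have "j \<notin># \<nu>"
      proof
        assume jn: "j \<in># \<nu>"
        have "\<nu> - {#j#} \<subseteq># \<mu> - {#j#}" using h jn jm by (auto simp: subset_eq_diff_conv insert_DiffM)
        moreover have "\<nu> = add_mset j (\<nu> - {#j#})" using jn by simp
        ultimately show False using h by blast
      qed
      thus "real (Cm \<mu> \<nu> * count \<nu> j) * G \<nu> = 0" by (simp add: count_eq_zero_iff)
    qed
  qed
  also have "\<dots> = (\<Sum>\<nu>'\<in>{\<nu>'. \<nu>' \<subseteq># \<mu> - {#j#}}. real (Cm \<mu> (add_mset j \<nu>') * count (add_mset j \<nu>') j) * G (add_mset j \<nu>'))"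
    by (subst sum.reindex) (auto simp: inj_on_def simp del: count_add_mset of_nat_mult)
  also have "\<dots> = (\<Sum>\<nu>'\<in>{\<nu>'. \<nu>' \<subseteq># \<mu> - {#j#}}. real (count \<mu> j) * (real (Cm (\<mu> - {#j#}) \<nu>') * G (add_mset j \<nu>')))"
  proof (rule sum.cong[OF refl])
    fix \<nu>' assume "\<nu>' \<in> {\<nu>'. \<nu>' \<subseteq># \<mu> - {#j#}}"
    hence "add_mset j \<nu>' \<subseteq># \<mu>" using img by blast
    from Cm_count[OF this, of j] have E: "Cm \<mu> (add_mset j \<nu>') * count (add_mset j \<nu>') j = count \<mu> j * Cm (\<mu> - {#j#}) \<nu>'"
      by simp
    show "real (Cm \<mu> (add_mset j \<nu>') * count (add_mset j \<nu>') j) * G (add_mset j \<nu>') = real (count \<mu> j) * (real (Cm (\<mu> - {#j#}) \<nu>') * G (add_mset j \<nu>'))"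
      unfolding E by simp
  qed
  also have "\<dots> = real (count \<mu> j) * (\<Sum>\<nu>'\<in>{\<nu>'. \<nu>' \<subseteq># \<mu> - {#j#}}. real (Cm (\<mu> - {#j#}) \<nu>') * G (add_mset j \<nu>'))"
    by (simp add: sum_distrib_left)
  finally show ?thesis .
qed

lemma H_main:
  "\<forall>a::int. \<forall>b. (\<Sum>\<nu>\<in>{\<nu>. \<nu> \<subseteq># \<mu>}. real (Cm \<mu> \<nu>) * ff \<nu> (real_of_int a) * ff (\<mu> - \<nu>) b)
      = ff \<mu> (real_of_int a + b)"
proof (induction "size \<mu>" arbitrary: \<mu> rule: less_induct)
  case less
  define S where "S a b = (\<Sum>\<nu>\<in>{\<nu>. \<nu> \<subseteq># \<mu>}. real (Cm \<mu> \<nu>) * ff \<nu> a * ff (\<mu> - \<nu>) b)" for a b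
  have key: "S (real_of_int a + 1) b - S (real_of_int a) b = ff \<mu> (real_of_int a + b + 1) - ff \<mu> (real_of_int a + b)"
    for a :: int and b
  proof -
    have "S (real_of_int a + 1) b - S (real_of_int a) b
       = (\<Sum>\<nu>\<in>{\<nu>. \<nu> \<subseteq># \<mu>}. real (Cm \<mu> \<nu>) * (ff \<nu> (real_of_int a + 1) - ff \<nu> (real_of_int a)) * ff (\<mu> - \<nu>) b)"
      unfolding S_def by (simp add: sum_subtractf[symmetric] algebra_simps)
    also have "\<dots> = (\<Sum>\<nu>\<in>{\<nu>. \<nu> \<subseteq># \<mu>}. \<Sum>j\<in>set_mset \<mu>. real (Cm \<mu> \<nu> * count \<nu> j) * (ff (\<nu> - {#j#}) (real_of_int a + real j + 1) * ff (\<mu> - \<nu>) b))"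
    proof (rule sum.cong[OF refl])
      fix \<nu> assume "\<nu> \<in> {\<nu>. \<nu> \<subseteq># \<mu>}"
      hence sub: "\<nu> \<subseteq># \<mu>" by simp
      have ss: "set_mset \<nu> \<subseteq> set_mset \<mu>" using sub by (simp add: set_mset_mono)
      have "(\<Sum>j\<in>set_mset \<nu>. real (count \<nu> j) * ff (\<nu> - {#j#}) (real_of_int a + real j + 1))
          = (\<Sum>j\<in>set_mset \<mu>. real (count \<nu> j) * ff (\<nu> - {#j#}) (real_of_int a + real j + 1))"
        by (rule sum.mono_neutral_left[OF _ ss]) (auto simp: count_eq_zero_iff)
      thus "real (Cm \<mu> \<nu>) * (ff \<nu> (real_of_int a + 1) - ff \<nu> (real_of_int a)) * ff (\<mu> - \<nu>) b
         = (\<Sum>j\<in>set_mset \<mu>. real (Cm \<mu> \<nu> * count \<nu> j) * (ff (\<nu> - {#j#}) (real_of_int a + real j + 1) * ff (\<mu> - \<nu>) b))"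
        unfolding ff_delta by (simp add: sum_distrib_left sum_distrib_right algebra_simps)
    qed
    also have "\<dots> = (\<Sum>j\<in>set_mset \<mu>. \<Sum>\<nu>\<in>{\<nu>. \<nu> \<subseteq># \<mu>}. real (Cm \<mu> \<nu> * count \<nu> j) * (ff (\<nu> - {#j#}) (real_of_int a + real j + 1) * ff (\<mu> - \<nu>) b))"
      by (rule sum.swap)
    also have "\<dots> = (\<Sum>j\<in>set_mset \<mu>. real (count \<mu> j) * ff (\<mu> - {#j#}) ((real_of_int a + b) + real j + 1))"
    proof (rule sum.cong[OF refl])
      fix j assume jm: "j \<in> set_mset \<mu>"
      have "(\<Sum>\<nu>\<in>{\<nu>. \<nu> \<subseteq># \<mu>}. real (Cm \<mu> \<nu> * count \<nu> j) * (ff (\<nu> - {#j#}) (real_of_int a + real j + 1) * ff (\<mu> - \<nu>) b))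
         = real (count \<mu> j) * (\<Sum>\<nu>'\<in>{\<nu>'. \<nu>' \<subseteq># \<mu> - {#j#}}. real (Cm (\<mu> - {#j#}) \<nu>') * (ff \<nu>' (real_of_int a + real j + 1) * ff (\<mu> - {#j#} - \<nu>') b))"
        using reindex_j[OF jm, of "\<lambda>\<nu>. ff (\<nu> - {#j#}) (real_of_int a + real j + 1) * ff (\<mu> - \<nu>) b"]
        by (simp add: diff_diff_add)
      also have "(\<Sum>\<nu>'\<in>{\<nu>'. \<nu>' \<subseteq># \<mu> - {#j#}}. real (Cm (\<mu> - {#j#}) \<nu>') * (ff \<nu>' (real_of_int a + real j + 1) * ff (\<mu> - {#j#} - \<nu>') b))
          = ff (\<mu> - {#j#}) (real_of_int (a + int j + 1) + b)"
      proof -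
        have lt: "size (\<mu> - {#j#}) < size \<mu>" using jm by (metis mset_subset_diff_self size_mset_mono less_irrefl mset_subset_size)
        have "real_of_int (a + int j + 1) = real_of_int a + real j + 1" by simp
        have "\<forall>a b. (\<Sum>\<nu>\<in>{\<nu>. \<nu> \<subseteq># \<mu> - {#j#}}. real (Cm (\<mu> - {#j#}) \<nu>) * ff \<nu> (real_of_int a) * ff (\<mu> - {#j#} - \<nu>) b)
            = ff (\<mu> - {#j#}) (real_of_int a + b)" using less(1)[OF lt] by blast
        from spec[OF spec[OF this, of "a + int j + 1"], of b]
        show ?thesis by (simp add: mult.assoc)
      qed
      finally show "(\<Sum>\<nu>\<in>{\<nu>. \<nu> \<subseteq># \<mu>}. real (Cm \<mu> \<nu> * count \<nu> j) * (ff (\<nu> - {#j#}) (real_of_int a + real j + 1) * ff (\<mu> - \<nu>) b))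
         = real (count \<mu> j) * ff (\<mu> - {#j#}) ((real_of_int a + b) + real j + 1)"
        by (simp add: algebra_simps)
    qed
    also have "\<dots> = ff \<mu> (real_of_int a + b + 1) - ff \<mu> (real_of_int a + b)"
      by (rule ff_delta[symmetric])
    finally show ?thesis .
  qed
  have base: "S 0 b = ff \<mu> b" for b
  proof -
    have "S 0 b = (\<Sum>\<nu>\<in>{\<nu>. \<nu> \<subseteq># \<mu>}. if \<nu> = {#} then ff \<mu> b else 0)"
      unfolding S_def by (intro sum.cong) (auto simp: ff_zero Cm_empty)
    also have "\<dots> = ff \<mu> b" using fin_sub[of \<mu>] by (simp add: sum.delta)
    finally show ?thesis .
  qed
  have "S (real_of_int a) b = ff \<mu> (real_of_int a + b)" for a :: int and b
  proof (induction a rule: int_induct[where k = 0])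
    case base
    then show ?case using \<open>\<And>b. S 0 b = ff \<mu> b\<close> by simp
  next
    case (step1 i)
    then show ?case using key[of i b] by (simp add: algebra_simps)
  next
    case (step2 i)
    then show ?case using key[of "i - 1" b] by (simp add: algebra_simps)
  qed
  then show ?case unfolding S_def by blast
qed

lemma zee_ext:
  assumes "finite A" "set_mset \<rho> \<subseteq> A"
  shows "zee \<rho> = (\<Prod>i\<in>A. fact (count \<rho> i) * i ^ count \<rho> i)"
  unfolding zee_def
  by (rule prod.mono_neutral_left[OF assms]) (auto simp: not_in_iff)

lemma zee_split:
  assumes sub: "\<nu> \<subseteq># \<mu>"
  shows "zee \<nu> * zee (\<mu> - \<nu>) * Cm \<mu> \<nu> = zee \<mu>"
proof -
  have s1: "set_mset \<nu> \<subseteq> set_mset \<mu>" using sub by (simp add: set_mset_mono)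
  have s2: "set_mset (\<mu> - \<nu>) \<subseteq> set_mset \<mu>" by (meson in_diffD subsetI)
  have le: "count \<nu> i \<le> count \<mu> i" for i using sub by (simp add: mset_subset_eq_count)
  have "zee \<nu> * zee (\<mu> - \<nu>) * Cm \<mu> \<nu> = (\<Prod>i\<in>set_mset \<mu>. (fact (count \<nu> i) * i ^ count \<nu> i) *
      (fact (count (\<mu> - \<nu>) i) * i ^ count (\<mu> - \<nu>) i) * (count \<mu> i choose count \<nu> i))"
    unfolding zee_ext[OF finite_set_mset s1] zee_ext[OF finite_set_mset s2] Cm_def by (simp add: prod.distrib)
  also have "\<dots> = (\<Prod>i\<in>set_mset \<mu>. fact (count \<mu> i) * i ^ count \<mu> i)"
  proof (rule prod.cong[OF refl])
    fix i
    have "fact (count \<nu> i) * fact (count \<mu> i - count \<nu> i) * (count \<mu> i choose count \<nu> i) = (fact (count \<mu> i) :: nat)"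
      using binomial_fact_lemma[OF le[of i]] by simp
    moreover have "i ^ count \<nu> i * i ^ (count \<mu> i - count \<nu> i) = i ^ count \<mu> i"
      using le[of i] by (simp add: power_add[symmetric])
    ultimately show "(fact (count \<nu> i) * i ^ count \<nu> i) * (fact (count (\<mu> - \<nu>) i) * i ^ count (\<mu> - \<nu>) i) * (count \<mu> i choose count \<nu> i)
       = fact (count \<mu> i) * i ^ count \<mu> i"
      by (simp add: algebra_simps)
  qed
  also have "\<dots> = zee \<mu>" by (simp add: zee_def)
  finally show ?thesis .
qed

lemma zee_pos: "0 \<notin># \<rho> \<Longrightarrow> zee \<rho> > 0"
  unfolding zee_def by (rule prod_pos) (metis fact_gt_zero gr0I of_nat_0_less_iff mult_pos_pos zero_less_power)

lemma poch_fact: "n \<ge> 1 \<Longrightarrow> pochhammer (real n) k * fact (n - 1) = fact (n + k - 1)"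
proof (induction k)
  case 0 then show ?case by simp
next
  case (Suc k)
  obtain m where m: "n = Suc m" using Suc.prems by (cases n) auto
  have "fact (n + Suc k - 1) = (fact (n + k - 1) :: real) * real (n + k)"
    unfolding m by (simp add: algebra_simps)
  then show ?case using Suc by (simp add: pochhammer_Suc algebra_simps)
qed

lemma sum_ge1: "0 \<notin># (\<rho>::nat multiset) \<Longrightarrow> \<rho> \<noteq> {#} \<Longrightarrow> sum_mset \<rho> \<ge> 1"
proof -
  assume z: "0 \<notin># \<rho>" and ne: "\<rho> \<noteq> {#}"
  then obtain x where x: "x \<in># \<rho>" by blast
  hence "sum_mset \<rho> = x + sum_mset (\<rho> - {#x#})" by (metis sum_mset.remove)
  moreover have "x \<noteq> 0" using x z by metis
  hence "x \<ge> 1" by simp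
  ultimately show ?thesis by simp
qed

definition Ap :: "nat multiset \<Rightarrow> real" where
  "Ap \<nu> = (if \<nu> = {#} then 0 else pochhammer (real (sum_mset \<nu>)) (size \<nu> - 1))"

lemma ff_m1: "ff \<nu> (-1) = (if \<nu> = {#} then 1 else - Ap \<nu>)"
  by (simp add: ff_def Ap_def)

lemma Cm_self: "Cm \<mu> \<mu> = 1"
  by (simp add: Cm_def)

lemma sum_Ap:
  assumes ne: "\<mu> \<noteq> {#}"
  shows "(\<Sum>\<nu>\<in>{\<nu>. \<nu> \<subseteq># \<mu>}. real (Cm \<mu> \<nu>) * Ap \<nu> * Ap (\<mu> - \<nu>)) = ff \<mu> (-2) + 2 * Ap \<mu>"
proof -
  have pt: "real (Cm \<mu> \<nu>) * Ap \<nu> * Ap (\<mu> - \<nu>) = real (Cm \<mu> \<nu>) * ff \<nu> (-1) * ff (\<mu> - \<nu>) (-1)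
      + ((if \<nu> = {#} then Ap \<mu> else 0) + (if \<nu> = \<mu> then Ap \<mu> else 0))"
    if "\<nu> \<in> {\<nu>. \<nu> \<subseteq># \<mu>}" for \<nu>
  proof -
    have sub: "\<nu> \<subseteq># \<mu>" using that by simp
    consider "\<nu> = {#}" | "\<nu> = \<mu>" | "\<nu> \<noteq> {#}" "\<nu> \<noteq> \<mu>" by blast
    then show ?thesis
    proof cases
      case 1 then show ?thesis using ne by (simp add: ff_m1 Cm_empty Ap_def)
    next
      case 2 then show ?thesis using ne by (simp add: ff_m1 Cm_self Ap_def)
    next
      case 3
      have "\<mu> - \<nu> \<noteq> {#}" using sub 3 by (metis subset_mset.antisym subset_mset.add_diff_inverse add.right_neutral
            Diff_eq_empty_iff_mset)
      then show ?thesis using 3 by (simp add: ff_m1)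
    qed
  qed
  have "(\<Sum>\<nu>\<in>{\<nu>. \<nu> \<subseteq># \<mu>}. real (Cm \<mu> \<nu>) * Ap \<nu> * Ap (\<mu> - \<nu>))
     = (\<Sum>\<nu>\<in>{\<nu>. \<nu> \<subseteq># \<mu>}. real (Cm \<mu> \<nu>) * ff \<nu> (-1) * ff (\<mu> - \<nu>) (-1))
       + ((\<Sum>\<nu>\<in>{\<nu>. \<nu> \<subseteq># \<mu>}. if \<nu> = {#} then Ap \<mu> else 0) + (\<Sum>\<nu>\<in>{\<nu>. \<nu> \<subseteq># \<mu>}. if \<nu> = \<mu> then Ap \<mu> else 0))"
    using pt by (simp add: sum.distrib)
  also have "(\<Sum>\<nu>\<in>{\<nu>. \<nu> \<subseteq># \<mu>}. real (Cm \<mu> \<nu>) * ff \<nu> (-1) * ff (\<mu> - \<nu>) (-1)) = ff \<mu> (-2)"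
    using spec[OF spec[OF H_main[of \<mu>], of "-1"], of "-1"] by simp
  also have "(\<Sum>\<nu>\<in>{\<nu>. \<nu> \<subseteq># \<mu>}. if \<nu> = {#} then Ap \<mu> else 0) = Ap \<mu>"
    using fin_sub[of \<mu>] by (simp add: sum.delta)
  also have "(\<Sum>\<nu>\<in>{\<nu>. \<nu> \<subseteq># \<mu>}. if \<nu> = \<mu> then Ap \<mu> else 0) = Ap \<mu>"
    using fin_sub[of \<mu>] by (simp add: sum.delta)
  finally show ?thesis by simp
qed

theorem propositionA3:
  shows "(\<lambda>\<mu>. if is_partition \<mu> \<and> plen \<mu> \<ge> 2
             then fact (psize \<mu> + plen \<mu> - 3) * real (plen \<mu> - 1)
                  / (fact (psize \<mu> - 1) * real (zee \<mu>))
             else 0)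
       = (\<lambda>\<mu>. 1/2 * mps_mult
              (\<lambda>\<nu>. if is_partition \<nu> \<and> \<nu> \<noteq> {#}
                    then fact (psize \<nu> + plen \<nu> - 2) / (fact (psize \<nu> - 1) * real (zee \<nu>))
                    else 0)
              (\<lambda>\<nu>. if is_partition \<nu> \<and> \<nu> \<noteq> {#}
                    then fact (psize \<nu> + plen \<nu> - 2) / (fact (psize \<nu> - 1) * real (zee \<nu>))
                    else 0) \<mu>)"
proof (rule ext)
  fix \<mu> :: "nat multiset"
  define A where "A \<nu> = (if is_partition \<nu> \<and> \<nu> \<noteq> {#}
                    then fact (psize \<nu> + plen \<nu> - 2) / (fact (psize \<nu> - 1) * real (zee \<nu>))
                    else (0::real))" for \<nu>
  have mm: "mps_mult A A \<mu> = (\<Sum>\<nu>\<in>{\<nu>. \<nu> \<subseteq># \<mu>}. A \<nu> * A (\<mu> - \<nu>))"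
    by (simp add: mps_mult_def)
  show "(if is_partition \<mu> \<and> plen \<mu> \<ge> 2
             then fact (psize \<mu> + plen \<mu> - 3) * real (plen \<mu> - 1)
                  / (fact (psize \<mu> - 1) * real (zee \<mu>))
             else 0) = 1/2 * mps_mult A A \<mu>"
  proof (cases "is_partition \<mu> \<and> plen \<mu> \<ge> 2")
    case False
    have "A \<nu> * A (\<mu> - \<nu>) = 0" if "\<nu> \<in> {\<nu>. \<nu> \<subseteq># \<mu>}" for \<nu>
    proof (rule ccontr)
      assume nz: "A \<nu> * A (\<mu> - \<nu>) \<noteq> 0"
      hence p1: "0 \<notin># \<nu>" "\<nu> \<noteq> {#}" and p2: "0 \<notin># \<mu> - \<nu>" "\<mu> - \<nu> \<noteq> {#}"
        unfolding A_def is_partition_def by (auto split: if_splits)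
      have eq: "\<mu> = \<nu> + (\<mu> - \<nu>)" using that by (simp add: subset_mset.add_diff_inverse)
      have "0 \<notin># \<mu>" using p1 p2 eq by (metis union_iff)
      moreover have "size \<mu> \<ge> 2"
      proof -
        have "size \<mu> = size \<nu> + size (\<mu> - \<nu>)" using eq by (metis size_union)
        moreover have "size \<nu> > 0" "size (\<mu> - \<nu>) > 0" using p1(2) p2(2) by (auto simp: nonempty_has_size)
        ultimately show ?thesis by linarith
      qed
      ultimately show False using False by (simp add: is_partition_def plen_def)
    qed
    hence "(\<Sum>\<nu>\<in>{\<nu>. \<nu> \<subseteq># \<mu>}. A \<nu> * A (\<mu> - \<nu>)) = 0" by (intro sum.neutral ballI)
    then show ?thesis unfolding mm if_not_P[OF False] by simp
  next
    case True
    have z0: "0 \<notin># \<mu>" and l2: "size \<mu> \<ge> 2" using True by (auto simp: is_partition_def plen_def)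
    have ne: "\<mu> \<noteq> {#}" using l2 by auto
    define n where "n = sum_mset \<mu>"
    define l where "l = size \<mu>"
    have n1: "n \<ge> 1" using sum_ge1[OF z0 ne] n_def by simp
    have zpos: "real (zee \<mu>) > 0" using zee_pos[OF z0] by simp
    have Aeq: "A \<nu> = Ap \<nu> / real (zee \<nu>)" if sub: "\<nu> \<subseteq># \<mu>" for \<nu>
    proof (cases "\<nu> = {#}")
      case True then show ?thesis by (simp add: A_def Ap_def)
    next
      case False
      have z: "0 \<notin># \<nu>" using sub z0 by (meson mset_subset_eqD)
      have s1: "sum_mset \<nu> \<ge> 1" using sum_ge1[OF z False] .
      have sz: "size \<nu> \<ge> 1" using False by (simp add: Suc_le_eq nonempty_has_size)
      have "pochhammer (real (sum_mset \<nu>)) (size \<nu> - 1) * fact (sum_mset \<nu> - 1) = fact (sum_mset \<nu> + (size \<nu> - 1) - 1)"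
        using poch_fact[OF s1] .
      moreover have "sum_mset \<nu> + (size \<nu> - 1) - 1 = sum_mset \<nu> + size \<nu> - 2" using sz by simp
      ultimately have "fact (sum_mset \<nu> + size \<nu> - 2) / fact (sum_mset \<nu> - 1) = (pochhammer (real (sum_mset \<nu>)) (size \<nu> - 1) :: real)"
        by (simp add: field_simps)
      then show ?thesis using False z
        by (simp add: A_def Ap_def is_partition_def psize_def plen_def field_simps)
    qed
    have trm: "A \<nu> * A (\<mu> - \<nu>) = real (Cm \<mu> \<nu>) * Ap \<nu> * Ap (\<mu> - \<nu>) / real (zee \<mu>)"
      if "\<nu> \<in> {\<nu>. \<nu> \<subseteq># \<mu>}" for \<nu>
    proof -
      have sub: "\<nu> \<subseteq># \<mu>" using that by simp
      have sub2: "\<mu> - \<nu> \<subseteq># \<mu>" by simp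
      have zz: "real (zee \<nu>) * real (zee (\<mu> - \<nu>)) * real (Cm \<mu> \<nu>) = real (zee \<mu>)"
      proof -
        have "real (zee \<nu> * zee (\<mu> - \<nu>) * Cm \<mu> \<nu>) = real (zee \<mu>)" by (simp only: zee_split[OF sub])
        thus ?thesis by (simp only: of_nat_mult)
      qed
      have p1: "real (zee \<nu>) > 0" using zee_pos sub z0 by (meson mset_subset_eqD of_nat_0_less_iff)
      have p2: "real (zee (\<mu> - \<nu>)) > 0" using zee_pos sub2 z0 by (meson mset_subset_eqD of_nat_0_less_iff)
      have p3: "real (Cm \<mu> \<nu>) \<noteq> 0" using zz zpos by (metis mult_zero_right less_irrefl)
      show ?thesis unfolding Aeq[OF sub] Aeq[OF sub2] zz[symmetric] using p1 p2 p3
        by (simp add: field_simps)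
    qed
    have "mps_mult A A \<mu> = (\<Sum>\<nu>\<in>{\<nu>. \<nu> \<subseteq># \<mu>}. real (Cm \<mu> \<nu>) * Ap \<nu> * Ap (\<mu> - \<nu>)) / real (zee \<mu>)"
      unfolding mm using trm by (simp add: sum_divide_distrib)
    also have "\<dots> = (ff \<mu> (-2) + 2 * Ap \<mu>) / real (zee \<mu>)" using sum_Ap[OF ne] by simp
    finally have M: "mps_mult A A \<mu> = (ff \<mu> (-2) + 2 * Ap \<mu>) / real (zee \<mu>)" .
    have e: "l - 1 = Suc (l - 2)" using l2 l_def by simp
    have rn: "real n - 2 + 1 = real (n - 1)" using n1 by simp
    have ffv: "ff \<mu> (-2) = -2 * (real (n - 1) * pochhammer (real n) (l - 2))"
      using ne unfolding ff_def n_def[symmetric] l_def[symmetric] e pochhammer_rec rn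
      using n1 by (simp add: algebra_simps)
    have Apv: "Ap \<mu> = pochhammer (real n) (l - 2) * (real n + real (l - 2))"
      using ne unfolding Ap_def n_def[symmetric] l_def[symmetric] e pochhammer_Suc by simp
    have pf: "pochhammer (real n) (l - 2) * fact (n - 1) = fact (n + (l - 2) - 1)" using poch_fact[OF n1] .
    have ix: "n + (l - 2) - 1 = n + l - 3" using l2 l_def by simp
    have rl: "real (l - 1) = real (l - 2) + 1" using l2 l_def by simp
    have "fact (n + l - 3) * real (l - 1) / (fact (n - 1) * real (zee \<mu>))
        = pochhammer (real n) (l - 2) * real (l - 1) / real (zee \<mu>)"
    proof -
      have pf': "(fact (n + l - 3) :: real) = pochhammer (real n) (l - 2) * fact (n - 1)" using pf ix by simp
      have "(fact (n - 1) :: real) \<noteq> 0" by simp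
      then show ?thesis unfolding pf' using zpos by (simp add: field_simps)
    qed
    also have "\<dots> = 1/2 * ((ff \<mu> (-2) + 2 * Ap \<mu>) / real (zee \<mu>))"
      unfolding ffv Apv rl using n1 zpos by (simp add: field_simps)
    finally show ?thesis using True M by (simp add: psize_def plen_def n_def l_def)
  qed
qed
end
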